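(* A strong regular facets-pairing structure $\mathcal{F}$ on $\mathcal{C}^n$ is perfect if and only if all $2^n$ vertices of $\mathcal{C}^n$ belong to a single face family of $\mathcal{F}$.
   Context: Let $[\pm n]=\{\pm1,\dots,\pm n\}$ and $\mathcal{C}^n=\{x\in\mathbb{R}^n: -\tfrac14\le x_i\le\tfrac14\}$. For $1\le i\le n$, $\mathbf{F}(i)$ and $\mathbf{F}(-i)$ denote the facets of $\mathcal{C}^n$ in $\{x_i=\tfrac14\}$ and $\{x_i=-\tfrac14\}$; for $j_1,\dots,j_s\in[\pm n]$ with distinct absolute values, $\mathbf{F}(j_1,\dots,j_s)=\bigcap_i\mathbf{F}(j_i)$ (every proper face has this form). A signed permutation is a bijection $\sigma$ of $[\pm n]$ with $\sigma(-k)=-\sigma(k)$. A facets-pairing structure on $\mathcal{C}^n$ is a pair $(\omega,\{\tau_j\})$ where $\omega$ is a bijection of $[\pm n]$ with $\omega\circ\omega=\mathrm{id}$ and $\tau_j:\mathbf{F}(j)\to\mathbf{F}(\omega(j))$ are face-preserving homeomorphisms with $\tau_{\omega(j)}=\tau_j^{-1}$, such that for all $|j|\ne|k|$, writing $\tau_j(\mathbf{F}(j,k))=\mathbf{F}(\omega(j),k')$ and $\tau_k(\mathbf{F}(j,k))=\mathbf{F}(j',\omega(k))$, one has $\tau_{k'}\tau_j(p)=\tau_{j'}\tau_k(p)$ for all $p\in\mathbf{F}(j,k)$. It is regular if each $\tau_j$ is a Euclidean isometry and $\omega$ is a signed permutation. A composition $\tau_{k_m}\circ\dots\circ\tau_{k_1}$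 applied to a proper face $f$ is valid if $f\subset\mathbf{F}(k_1)$ and $\tau_{k_i}\circ\dots\circ\tau_{k_1}(f)\subset\mathbf{F}(k_{i+1})$ for $1\le i<m$ ($m=0$ allowed). The face family $\widehat f$ is the set of faces $\tau_{k_m}\circ\dots\circ\tau_{k_1}(f)$ over all valid compositions. $\mathcal{F}$ is perfect if for every proper face $f$ of codimension $s$, $\widehat f$ has exactly $2^s$ elements. For a proper face $f$ let $\Xi(f)$ be the set of facets containing $f$. If $f\subset\mathbf{F}(k)$ and $f'=\tau_k(f)$, define $\Psi^f_k:\Xi(f)\to\Xi(f')$ by $\Psi^f_k(\mathbf{F}(k))=\mathbf{F}(\omega(k))$ and, for $F'\in\Xi(f)\setminus\{\mathbf{F}(k)\}$, $\Psi^f_k(F')$ is the facet $G$ with $G\cap\mathbf{F}(\omega(k))=\tau_k(F'\cap\mathbf{F}(k))$. $\mathcal{F}$ is strong if for every proper face $f$ and any two valid compositions mapping $f$ onto the same face $\widetilde f$: (a) they agree at every point of $f$; and (b) the corresponding composites of the maps $\Psi$ along the two compositions coincide as maps $\Xi(f)\to\Xi(\widetilde f)$. *)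

theory Defs
  imports "HOL-Analysis.Analysis"
begin

text \<open>Signed indices [+-n] are rendered as pairs (i, b) :: 'n \<times> bool, where
  (i, True) stands for +i and (i, False) for -i; |(i,b)| = i.
  Points of R^n are elements of real^'n, n = CARD('n).\<close>

type_synonym 'n sidx = "'n \<times> bool"

definition sneg :: "'n sidx \<Rightarrow> 'n sidx" where
  "sneg j = (fst j, \<not> snd j)"

definition cube :: "(real^'n::finite) set" where
  "cube = {x. \<forall>i. -(1/4) \<le> x $ i \<and> x $ i \<le> 1/4}"

definition facet :: "'n::finite sidx \<Rightarrow> (real^'n) set" where
  "facet j = {x \<in> cube. x $ fst j = (if snd j then 1/4 else -(1/4))}"

definition proper_face :: "(real^'n::finite) set \<Rightarrow> bool" where
  "proper_face f \<longleftrightarrow> (\<exists>J::'n sidx set. J \<noteq> {} \<and>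
      (\<forall>j\<in>J. \<forall>k\<in>J. fst j = fst k \<longrightarrow> j = k) \<and> f = (\<Inter>j\<in>J. facet j))"

definition Xi :: "(real^'n::finite) set \<Rightarrow> 'n sidx set" where
  "Xi f = {j. f \<subseteq> facet j}"

definition codim :: "(real^'n::finite) set \<Rightarrow> nat" where
  "codim f = card (Xi f)"

definition vertex :: "(real^'n::finite) \<Rightarrow> bool" where
  "vertex x \<longleftrightarrow> (\<forall>i. x $ i = 1/4 \<or> x $ i = -(1/4))"

definition facets_pairing ::
  "('n::finite sidx \<Rightarrow> 'n sidx) \<Rightarrow> ('n sidx \<Rightarrow> real^'n \<Rightarrow> real^'n) \<Rightarrow> bool" where
  "facets_pairing \<omega> \<tau> \<longleftrightarrow>
     bij \<omega> \<and> \<omega> \<circ> \<omega> = id \<and>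
     (\<forall>j. homeomorphism (facet j) (facet (\<omega> j)) (\<tau> j) (\<tau> (\<omega> j))) \<and>
     (\<forall>j f. proper_face f \<and> f \<subseteq> facet j \<longrightarrow> proper_face (\<tau> j ` f)) \<and>
     (\<forall>j k j' k'. fst j \<noteq> fst k \<longrightarrow>
        \<tau> j ` (facet j \<inter> facet k) = facet (\<omega> j) \<inter> facet k' \<longrightarrow>
        \<tau> k ` (facet j \<inter> facet k) = facet j' \<inter> facet (\<omega> k) \<longrightarrow>
        (\<forall>p \<in> facet j \<inter> facet k. \<tau> k' (\<tau> j p) = \<tau> j' (\<tau> k p)))"

definition signed_perm :: "('n::finite sidx \<Rightarrow> 'n sidx) \<Rightarrow> bool" where
  "signed_perm \<omega> \<longleftrightarrow> bij \<omega> \<and> (\<forall>k. \<omega> (sneg k) = sneg (\<omega> k))"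

definition regular_fps ::
  "('n::finite sidx \<Rightarrow> 'n sidx) \<Rightarrow> ('n sidx \<Rightarrow> real^'n \<Rightarrow> real^'n) \<Rightarrow> bool" where
  "regular_fps \<omega> \<tau> \<longleftrightarrow> facets_pairing \<omega> \<tau> \<and> signed_perm \<omega> \<and>
     (\<forall>j. \<forall>x\<in>facet j. \<forall>y\<in>facet j. dist (\<tau> j x) (\<tau> j y) = dist x y)"

text \<open>A composition tau_{k_m} o ... o tau_{k_1} is given by the list [k_1,...,k_m].\<close>
fun valid_comp :: "('n::finite sidx \<Rightarrow> real^'n \<Rightarrow> real^'n) \<Rightarrow> (real^'n) set \<Rightarrow> 'n sidx list \<Rightarrow> bool" where
  "valid_comp \<tau> f [] = True"
| "valid_comp \<tau> f (k # ks) = (f \<subseteq> facet k \<and> valid_comp \<tau> (\<tau> k ` f) ks)"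

definition comp_map :: "('n sidx \<Rightarrow> real^'n \<Rightarrow> real^'n) \<Rightarrow> 'n sidx list \<Rightarrow> real^'n \<Rightarrow> real^'n" where
  "comp_map \<tau> ks p = fold (\<lambda>k q. \<tau> k q) ks p"

definition face_family ::
  "('n::finite sidx \<Rightarrow> real^'n \<Rightarrow> real^'n) \<Rightarrow> (real^'n) set \<Rightarrow> (real^'n) set set" where
  "face_family \<tau> f = {comp_map \<tau> ks ` f | ks. valid_comp \<tau> f ks}"

definition perfect ::
  "('n::finite sidx \<Rightarrow> real^'n \<Rightarrow> real^'n) \<Rightarrow> bool" where
  "perfect \<tau> \<longleftrightarrow> (\<forall>f. proper_face f \<longrightarrow> card (face_family \<tau> f) = 2 ^ codim f)"

definition Psi ::
  "('n::finite sidx \<Rightarrow> 'n sidx) \<Rightarrow> ('n sidx \<Rightarrow> real^'n \<Rightarrow> real^'n) \<Rightarrow> 'n sidx \<Rightarrow> 'n sidx \<Rightarrow> 'n sidx" where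
  "Psi \<omega> \<tau> k j = (if j = k then \<omega> k
      else (THE l. facet l \<inter> facet (\<omega> k) = \<tau> k ` (facet j \<inter> facet k)))"

definition Psi_comp ::
  "('n::finite sidx \<Rightarrow> 'n sidx) \<Rightarrow> ('n sidx \<Rightarrow> real^'n \<Rightarrow> real^'n) \<Rightarrow> 'n sidx list \<Rightarrow> 'n sidx \<Rightarrow> 'n sidx" where
  "Psi_comp \<omega> \<tau> ks j = fold (\<lambda>k l. Psi \<omega> \<tau> k l) ks j"

definition strong ::
  "('n::finite sidx \<Rightarrow> 'n sidx) \<Rightarrow> ('n sidx \<Rightarrow> real^'n \<Rightarrow> real^'n) \<Rightarrow> bool" where
  "strong \<omega> \<tau> \<longleftrightarrow> (\<forall>f ks1 ks2. proper_face f \<longrightarrow> valid_comp \<tau> f ks1 \<longrightarrow> valid_comp \<tau> f ks2 \<longrightarrow>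
      comp_map \<tau> ks1 ` f = comp_map \<tau> ks2 ` f \<longrightarrow>
      (\<forall>p\<in>f. comp_map \<tau> ks1 p = comp_map \<tau> ks2 p) \<and>
      (\<forall>j\<in>Xi f. Psi_comp \<omega> \<tau> ks1 j = Psi_comp \<omega> \<tau> ks2 j))"

end

theory Submission
  imports Defs
begin


definition sg :: "bool \<Rightarrow> real" where "sg b = (if b then 1/4 else -(1/4))"

lemma sg_inj[simp]: "sg a = sg b \<longleftrightarrow> a = b" by (auto simp: sg_def)

lemma mem_facet: "x \<in> facet j \<longleftrightarrow> x \<in> cube \<and> x $ fst j = sg (snd j)"
  by (simp add: facet_def sg_def)

lemma mem_cube: "x \<in> cube \<longleftrightarrow> (\<forall>i. -(1/4) \<le> x$i \<and> x$i \<le> 1/4)"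
  by (simp add: cube_def)

definition consJ :: "'n sidx set \<Rightarrow> bool" where
  "consJ J \<longleftrightarrow> (\<forall>j\<in>J. \<forall>k\<in>J. fst j = fst k \<longrightarrow> j = k)"

definition Vt :: "(real^'n::finite) set \<Rightarrow> (real^'n) set" where
  "Vt S = {v. vertex v \<and> v \<in> S}"

definition cv :: "'n::finite sidx set \<Rightarrow> 'n set \<Rightarrow> real^'n" where
  "cv J A = (\<chi> i. if (\<exists>j\<in>J. fst j = i) then sg (snd (SOME j. j \<in> J \<and> fst j = i))
      else if i \<in> A then 1/4 else -(1/4))"

lemma cv_J: assumes "consJ J" "j \<in> J" shows "cv J A $ fst j = sg (snd j)"
proof -
  have "\<exists>j'. j' \<in> J \<and> fst j' = fst j" using assms by blast
  then have s: "(SOME j'. j' \<in> J \<and> fst j' = fst j) \<in> J \<and> fst (SOME j'. j' \<in> J \<and> fst j' = fst j) = fst j"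
    by (rule someI_ex)
  then have "(SOME j'. j' \<in> J \<and> fst j' = fst j) = j" using assms unfolding consJ_def by blast
  then show ?thesis using assms by (auto simp: cv_def)
qed

lemma cv_notJ: "i \<notin> fst ` J \<Longrightarrow> cv J A $ i = (if i \<in> A then 1/4 else -(1/4))"
  by (auto simp: cv_def)

lemma cv_vertex: "vertex (cv J A)"
  by (auto simp: vertex_def cv_def sg_def)

lemma vertex_cube: "vertex v \<Longrightarrow> v \<in> cube"
  unfolding vertex_def mem_cube
proof (intro allI)
  fix i assume "\<forall>i. v $ i = 1/4 \<or> v $ i = -(1/4)"
  then have "v $ i = 1/4 \<or> v $ i = -(1/4)" by blast
  then show "-(1/4) \<le> v$i \<and> v$i \<le> 1/4" by auto
qed

lemma cv_face: "consJ J \<Longrightarrow> cv J A \<in> (\<Inter>j\<in>J. facet j)"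
  using cv_J cv_vertex[of J A] vertex_cube by (auto simp: mem_facet)

lemma Xi_faceJ: fixes J :: "'n::finite sidx set"
  assumes "consJ J" shows "Xi (\<Inter>j\<in>J. facet j) = J"
proof
  show "J \<subseteq> Xi (\<Inter>j\<in>J. facet j)" by (auto simp: Xi_def)
  show "Xi (\<Inter>j\<in>J. facet j) \<subseteq> J"
  proof
    fix l assume l: "l \<in> Xi (\<Inter>j\<in>J. facet j)"
    define A where "A = (if snd l then {} else {fst l})"
    have "cv J A \<in> facet l" using l cv_face[OF assms] by (auto simp: Xi_def)
    then have e: "cv J A $ fst l = sg (snd l)" by (simp add: mem_facet)
    show "l \<in> J"
    proof (cases "fst l \<in> fst ` J")
      case True
      then obtain j where j: "j \<in> J" "fst j = fst l" by auto
      then have "sg (snd j) = sg (snd l)" using e cv_J[OF assms j(1)] by simp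
      then have "j = l" using j by (simp add: prod_eq_iff)
      then show ?thesis using j by simp
    next
      case False
      then show ?thesis using e cv_notJ[OF False] by (auto simp: A_def sg_def split: if_splits)
    qed
  qed
qed

lemma consJ_card: fixes J :: "'n::finite sidx set"
  assumes "consJ J" shows "inj_on fst J" "card (fst ` J) = card J" "card J \<le> CARD('n)"
proof -
  show i: "inj_on fst J" using assms unfolding consJ_def inj_on_def by blast
  show c: "card (fst ` J) = card J" using card_image[OF i] .
  have "card (fst ` J) \<le> CARD('n)" by (rule card_mono) auto
  then show "card J \<le> CARD('n)" using c by simp
qed

lemma Vt_card: fixes J :: "'n::finite sidx set"
  assumes "consJ J" shows "card (Vt (\<Inter>j\<in>J. facet j)) = 2 ^ (CARD('n) - card J)"
proof -
  define h where "h v = {i. i \<notin> fst ` J \<and> v $ i = 1/4}" for v :: "real^'n"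
  have inj: "inj_on h (Vt (\<Inter>j\<in>J. facet j))"
  proof (rule inj_onI)
    fix v w assume v: "v \<in> Vt (\<Inter>j\<in>J. facet j)" and w: "w \<in> Vt (\<Inter>j\<in>J. facet j)" and e: "h v = h w"
    show "v = w" unfolding vec_eq_iff
    proof
      fix i show "v $ i = w $ i"
      proof (cases "i \<in> fst ` J")
        case True
        then obtain j where j: "j \<in> J" "fst j = i" by auto
        then show ?thesis using v w by (auto simp: Vt_def mem_facet)
      next
        case False
        have "i \<in> h v \<longleftrightarrow> i \<in> h w" using e by simp
        then have "v $ i = 1/4 \<longleftrightarrow> w $ i = 1/4" using False by (simp add: h_def)
        moreover have "v $ i = 1/4 \<or> v $ i = -(1/4)" "w $ i = 1/4 \<or> w $ i = -(1/4)"
          using v w by (auto simp: Vt_def vertex_def)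
        ultimately show ?thesis by auto
      qed
    qed
  qed
  have img: "h ` Vt (\<Inter>j\<in>J. facet j) = Pow (- fst ` J)"
  proof
    show "h ` Vt (\<Inter>j\<in>J. facet j) \<subseteq> Pow (- fst ` J)" by (auto simp: h_def)
    show "Pow (- fst ` J) \<subseteq> h ` Vt (\<Inter>j\<in>J. facet j)"
    proof
      fix A assume A: "A \<in> Pow (- fst ` J)"
      have "cv J A \<in> Vt (\<Inter>j\<in>J. facet j)" using cv_face[OF assms] cv_vertex by (auto simp: Vt_def)
      moreover have "h (cv J A) = A"
      proof -
        have "i \<in> h (cv J A) \<longleftrightarrow> i \<in> A" for i
          using A cv_notJ[of i J A] by (auto simp: h_def split: if_splits)
        then show ?thesis by blast
      qed
      ultimately show "A \<in> h ` Vt (\<Inter>j\<in>J. facet j)" by (metis imageI)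
    qed
  qed
  have "card (Vt (\<Inter>j\<in>J. facet j)) = card (Pow (- fst ` J))"
    using card_image[OF inj] img by simp
  also have "\<dots> = 2 ^ card (- fst ` J)" by (simp add: card_Pow)
  also have "card (- fst ` J) = CARD('n) - card J"
  proof -
    have "- fst ` J = UNIV - fst ` J" by auto
    then show ?thesis using card_Diff_subset[of "fst ` J" UNIV] consJ_card[OF assms] by simp
  qed
  finally show ?thesis .
qed

lemma proper_faceI: "consJ J \<Longrightarrow> J \<noteq> {} \<Longrightarrow> proper_face (\<Inter>j\<in>J. facet j)"
  unfolding proper_face_def consJ_def by blast

lemma proper_Xi: assumes "proper_face f"
  shows "consJ (Xi f)" "Xi f \<noteq> {}" "f = (\<Inter>j\<in>Xi f. facet j)"
proof -
  obtain J where J: "J \<noteq> {}" "consJ J" "f = (\<Inter>j\<in>J. facet j)"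
    using assms unfolding proper_face_def consJ_def by blast
  have "Xi f = J" using Xi_faceJ[OF J(2)] J(3) by simp
  then show "consJ (Xi f)" "Xi f \<noteq> {}" "f = (\<Inter>j\<in>Xi f. facet j)" using J by auto
qed

lemma proper_vertex_ex: assumes "proper_face f" shows "\<exists>u. vertex u \<and> u \<in> f"
  using cv_face[OF proper_Xi(1)[OF assms]] cv_vertex proper_Xi(3)[OF assms] by metis

lemma vertices_card: "card {v :: real^'n::finite. vertex v} = 2 ^ CARD('n)"
proof -
  have "consJ ({} :: 'n sidx set)" by (simp add: consJ_def)
  from Vt_card[OF this] show ?thesis by (simp add: Vt_def)
qed

lemma vertices_finite: "finite {v :: real^'n::finite. vertex v}"
  using vertices_card[where 'n='n] by (metis card_ge_0_finite zero_less_numeral zero_less_power)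

definition vJ :: "real^'n::finite \<Rightarrow> 'n sidx set" where
  "vJ v = range (\<lambda>i. (i, v $ i = 1/4))"

lemma vJ_cons: "consJ (vJ v)" by (auto simp: consJ_def vJ_def)

lemma vertex_face: assumes "vertex v" shows "{v} = (\<Inter>j\<in>vJ v. facet j)"
proof
  have c: "v $ i = sg (v $ i = 1/4)" for i using assms by (auto simp: vertex_def sg_def)
  show "{v} \<subseteq> (\<Inter>j\<in>vJ v. facet j)" using c vertex_cube[OF assms] by (auto simp: vJ_def mem_facet)
  show "(\<Inter>j\<in>vJ v. facet j) \<subseteq> {v}"
  proof
    fix x assume "x \<in> (\<Inter>j\<in>vJ v. facet j)"
    then have "x $ i = v $ i" for i using c[of i] by (auto simp: vJ_def mem_facet)
    then show "x \<in> {v}" by (simp add: vec_eq_iff)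
  qed
qed

lemma vertex_proper: fixes v :: "real^'n::finite" assumes "vertex v" shows "proper_face {v}" "Xi {v} = vJ v" "card (Xi {v}) = CARD('n)"
proof -
  show "proper_face {v}" using vertex_face[OF assms] proper_faceI[OF vJ_cons] by (auto simp: vJ_def)
  show x: "Xi {v} = vJ v" using vertex_face[OF assms] Xi_faceJ[OF vJ_cons] by metis
  have "inj (\<lambda>i::'n. (i, v $ i = 1/4))" by (auto simp: inj_def)
  then show "card (Xi {v}) = CARD('n)" unfolding x vJ_def by (simp add: card_image)
qed

lemma proper_singleton_vertex: fixes p :: "real^'n::finite"
  assumes "proper_face {p}" shows "vertex p"
proof -
  note P = proper_Xi[OF assms]
  have "Vt {p} \<subseteq> {p}" by (auto simp: Vt_def)
  then have "card (Vt {p}) \<le> 1" using card_mono[of "{p}" "Vt {p}"] by simp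
  then have "(2::nat) ^ (CARD('n) - card (Xi {p})) \<le> 1" using Vt_card[OF P(1)] P(3) by simp
  then have "CARD('n) - card (Xi {p}) = 0"
    by (metis le_antisym one_le_numeral one_le_power power_inject_exp nat_less_le power_0 one_less_numeral_iff semiring_norm(76) zero_less_diff)
  then have "card (fst ` Xi {p}) = CARD('n)" using consJ_card[OF P(1)] by simp
  then have u: "fst ` Xi {p} = UNIV" by (simp add: card_eq_UNIV_imp_eq_UNIV)
  show ?thesis unfolding vertex_def
  proof
    fix i
    obtain j where j: "j \<in> Xi {p}" "fst j = i" using u by (metis UNIV_I imageE)
    then have "p $ i = sg (snd j)" by (auto simp: Xi_def mem_facet)
    then show "p $ i = 1/4 \<or> p $ i = -(1/4)" by (auto simp: sg_def)
  qed
qed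



lemma comp_map_Nil[simp]: "comp_map \<tau> [] p = p" by (simp add: comp_map_def)
lemma comp_map_Cons[simp]: "comp_map \<tau> (k#ks) p = comp_map \<tau> ks (\<tau> k p)" by (simp add: comp_map_def)
lemma comp_map_append: "comp_map \<tau> (a@b) p = comp_map \<tau> b (comp_map \<tau> a p)" by (simp add: comp_map_def)
lemma Psi_comp_Nil[simp]: "Psi_comp \<omega> \<tau> [] j = j" by (simp add: Psi_comp_def)
lemma Psi_comp_Cons[simp]: "Psi_comp \<omega> \<tau> (k#ks) j = Psi_comp \<omega> \<tau> ks (Psi \<omega> \<tau> k j)" by (simp add: Psi_comp_def)
lemma Psi_comp_append: "Psi_comp \<omega> \<tau> (a@b) j = Psi_comp \<omega> \<tau> b (Psi_comp \<omega> \<tau> a j)" by (simp add: Psi_comp_def)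

lemma comp_map_img_Cons: "comp_map \<tau> (k#ks) ` f = comp_map \<tau> ks ` (\<tau> k ` f)"
  by (simp add: image_image)

lemma valid_append: "valid_comp \<tau> f (a@b) \<longleftrightarrow> valid_comp \<tau> f a \<and> valid_comp \<tau> (comp_map \<tau> a ` f) b"
  by (induction a arbitrary: f) (auto simp: image_image)

locale fps =
  fixes \<omega> :: "'n::finite sidx \<Rightarrow> 'n sidx" and \<tau> :: "'n sidx \<Rightarrow> real^'n \<Rightarrow> real^'n"
  assumes reg: "regular_fps \<omega> \<tau>"
begin

lemma FP: "facets_pairing \<omega> \<tau>" using reg unfolding regular_fps_def by blast

lemma hom: "homeomorphism (facet j) (facet (\<omega> j)) (\<tau> j) (\<tau> (\<omega> j))"
  using FP unfolding facets_pairing_def by blast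

lemma om2[simp]: "\<omega> (\<omega> j) = j"
proof -
  have "\<omega> \<circ> \<omega> = id" using FP unfolding facets_pairing_def by blast
  then show ?thesis by (metis comp_apply id_apply)
qed

lemma fp: "proper_face f \<Longrightarrow> f \<subseteq> facet j \<Longrightarrow> proper_face (\<tau> j ` f)"
  using FP unfolding facets_pairing_def by blast

lemma comm: "fst j \<noteq> fst k \<Longrightarrow> \<tau> j ` (facet j \<inter> facet k) = facet (\<omega> j) \<inter> facet k' \<Longrightarrow>
        \<tau> k ` (facet j \<inter> facet k) = facet j' \<inter> facet (\<omega> k) \<Longrightarrow>
        p \<in> facet j \<inter> facet k \<Longrightarrow> \<tau> k' (\<tau> j p) = \<tau> j' (\<tau> k p)"
proof -
  have "\<forall>j k j' k'. fst j \<noteq> fst k \<longrightarrow>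
        \<tau> j ` (facet j \<inter> facet k) = facet (\<omega> j) \<inter> facet k' \<longrightarrow>
        \<tau> k ` (facet j \<inter> facet k) = facet j' \<inter> facet (\<omega> k) \<longrightarrow>
        (\<forall>p \<in> facet j \<inter> facet k. \<tau> k' (\<tau> j p) = \<tau> j' (\<tau> k p))"
    using FP unfolding facets_pairing_def by (elim conjE) assumption
  then show "fst j \<noteq> fst k \<Longrightarrow> \<tau> j ` (facet j \<inter> facet k) = facet (\<omega> j) \<inter> facet k' \<Longrightarrow>
        \<tau> k ` (facet j \<inter> facet k) = facet j' \<inter> facet (\<omega> k) \<Longrightarrow>
        p \<in> facet j \<inter> facet k \<Longrightarrow> \<tau> k' (\<tau> j p) = \<tau> j' (\<tau> k p)" by blast
qed

lemma tau_img: "\<tau> j ` facet j = facet (\<omega> j)" using hom[of j] by (simp add: homeomorphism_def)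
lemma tau_in: "x \<in> facet j \<Longrightarrow> \<tau> j x \<in> facet (\<omega> j)" using tau_img by blast
lemma tau_inv: "x \<in> facet j \<Longrightarrow> \<tau> (\<omega> j) (\<tau> j x) = x" using hom[of j] by (simp add: homeomorphism_def)
lemma tau_inj: "inj_on (\<tau> j) (facet j)" by (metis inj_on_inverseI tau_inv)

lemma VM: "vertex x \<Longrightarrow> x \<in> facet k \<Longrightarrow> vertex (\<tau> k x)"
  using fp[of "{x}" k] vertex_proper(1)[of x] proper_singleton_vertex by auto

lemma Vt_img: assumes "g \<subseteq> facet k" shows "Vt (\<tau> k ` g) = \<tau> k ` Vt g"
proof
  show "\<tau> k ` Vt g \<subseteq> Vt (\<tau> k ` g)" unfolding Vt_def using VM assms by blast
  show "Vt (\<tau> k ` g) \<subseteq> \<tau> k ` Vt g"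
  proof
    fix y assume "y \<in> Vt (\<tau> k ` g)"
    then obtain x where x: "x \<in> g" "y = \<tau> k x" "vertex y" by (auto simp: Vt_def)
    have xf: "x \<in> facet k" using x assms by auto
    have "vertex (\<tau> (\<omega> k) y)" using VM[of y "\<omega> k"] x tau_in[OF xf] by simp
    then have "vertex x" using tau_inv[OF xf] x by simp
    then show "y \<in> \<tau> k ` Vt g" using x by (auto simp: Vt_def)
  qed
qed

lemma CP: assumes "proper_face g" "g \<subseteq> facet k" shows "card (Xi (\<tau> k ` g)) = card (Xi g)"
proof -
  have pg: "proper_face (\<tau> k ` g)" using fp assms by blast
  have "inj_on (\<tau> k) (Vt g)" by (rule inj_on_subset[OF tau_inj]) (use assms(2) in \<open>auto simp: Vt_def\<close>)
  then have "card (Vt (\<tau> k ` g)) = card (Vt g)" using Vt_img[OF assms(2)] card_image by metis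
  then have e: "(2::nat) ^ (CARD('n) - card (Xi (\<tau> k ` g))) = 2 ^ (CARD('n) - card (Xi g))"
    using Vt_card[OF proper_Xi(1)[OF pg]] Vt_card[OF proper_Xi(1)[OF assms(1)]]
      proper_Xi(3)[OF pg] proper_Xi(3)[OF assms(1)] by metis
  have "CARD('n) - card (Xi (\<tau> k ` g)) = CARD('n) - card (Xi g)"
    using e by (simp add: power_inject_exp)
  moreover have "card (Xi (\<tau> k ` g)) \<le> CARD('n)" "card (Xi g) \<le> CARD('n)"
    using consJ_card(3) proper_Xi(1) pg assms(1) by blast+
  ultimately show ?thesis by linarith
qed

lemma Xi_two: assumes "fst j \<noteq> fst k" shows "facet j \<inter> facet k = (\<Inter>l\<in>{j,k}. facet l)"
    "consJ {j,k}" "Xi (facet j \<inter> facet k) = {j,k}" "proper_face (facet j \<inter> facet k)"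
proof -
  show e: "facet j \<inter> facet k = (\<Inter>l\<in>{j,k}. facet l)" by simp
  show c: "consJ {j,k}" unfolding consJ_def
  proof (intro ballI impI)
    fix a b assume "a \<in> {j,k}" "b \<in> {j,k}" "fst a = fst b"
    then show "a = b" using assms by (metis insertE singletonD)
  qed
  show "Xi (facet j \<inter> facet k) = {j,k}" unfolding e by (rule Xi_faceJ[OF c])
  show "proper_face (facet j \<inter> facet k)" unfolding e by (rule proper_faceI[OF c]) simp
qed

lemma PA: assumes "fst j \<noteq> fst k"
  shows "facet (Psi \<omega> \<tau> k j) \<inter> facet (\<omega> k) = \<tau> k ` (facet j \<inter> facet k)" "Psi \<omega> \<tau> k j \<noteq> \<omega> k"
proof -
  define h where "h = \<tau> k ` (facet j \<inter> facet k)"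
  note X = Xi_two[OF assms]
  have jk: "j \<noteq> k" using assms by auto
  have ph: "proper_face h" unfolding h_def using fp[OF X(4)] by blast
  have "card (Xi h) = 2" unfolding h_def using CP[OF X(4)] X(3) jk by simp
  moreover have "\<omega> k \<in> Xi h" unfolding h_def Xi_def using tau_img by blast
  ultimately obtain l where l: "Xi h = {\<omega> k, l}" "l \<noteq> \<omega> k"
  proof -
    assume r: "\<And>l. Xi h = {\<omega> k, l} \<Longrightarrow> l \<noteq> \<omega> k \<Longrightarrow> thesis"
    assume "card (Xi h) = 2" "\<omega> k \<in> Xi h"
    then obtain x y where xy: "Xi h = {x,y}" "x \<noteq> y" "\<omega> k \<in> {x,y}" unfolding card_2_iff by blast
    show thesis
    proof (cases "\<omega> k = x")
      case True then show ?thesis using r[of y] xy by simp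
    next
      case False then have "\<omega> k = y" using xy by blast
      then show ?thesis using r[of x] xy by (simp add: insert_commute)
    qed
  qed
  have "h = (\<Inter>j\<in>Xi h. facet j)" by (rule proper_Xi(3)[OF ph])
  also have "\<dots> = facet l \<inter> facet (\<omega> k)" unfolding l(1) by blast
  finally have hl: "h = facet l \<inter> facet (\<omega> k)" .
  have uniq: "l' = l" if "facet l' \<inter> facet (\<omega> k) = h" for l'
  proof -
    have "l' \<in> Xi h" using that by (auto simp: Xi_def)
    then have "l' = \<omega> k \<or> l' = l" using l by auto
    moreover have "l' \<noteq> \<omega> k"
    proof
      assume "l' = \<omega> k"
      then have "h = (\<Inter>m\<in>{\<omega> k}. facet m)" using that by auto
      then have "Xi h = {\<omega> k}" using Xi_faceJ[of "{\<omega> k}"] by (simp add: consJ_def)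
      then show False using l by auto
    qed
    ultimately show ?thesis by blast
  qed
  have "Psi \<omega> \<tau> k j = (THE l. facet l \<inter> facet (\<omega> k) = h)" using jk by (simp add: Psi_def h_def)
  also have "\<dots> = l" using uniq hl by (intro the_equality) auto
  finally have P: "Psi \<omega> \<tau> k j = l" .
  show "facet (Psi \<omega> \<tau> k j) \<inter> facet (\<omega> k) = \<tau> k ` (facet j \<inter> facet k)" using P hl h_def by simp
  show "Psi \<omega> \<tau> k j \<noteq> \<omega> k" using P l by simp
qed

lemma L1: assumes "proper_face g" "g \<subseteq> facet k"
  shows "Xi (\<tau> k ` g) = Psi \<omega> \<tau> k ` Xi g" "inj_on (Psi \<omega> \<tau> k) (Xi g)"
proof -
  have kX: "k \<in> Xi g" using assms by (simp add: Xi_def)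
  have cg: "consJ (Xi g)" using proper_Xi(1)[OF assms(1)] .
  have fstne: "fst j \<noteq> fst k" if "j \<in> Xi g" "j \<noteq> k" for j using cg that kX by (auto simp: consJ_def)
  have sub: "Psi \<omega> \<tau> k ` Xi g \<subseteq> Xi (\<tau> k ` g)"
  proof
    fix l assume "l \<in> Psi \<omega> \<tau> k ` Xi g"
    then obtain j where j: "j \<in> Xi g" "l = Psi \<omega> \<tau> k j" by auto
    show "l \<in> Xi (\<tau> k ` g)"
    proof (cases "j = k")
      case True
      then show ?thesis using j tau_img[of k] assms(2) by (auto simp: Xi_def Psi_def)
    next
      case False
      have "g \<subseteq> facet j \<inter> facet k" using j assms(2) by (auto simp: Xi_def)
      then have "\<tau> k ` g \<subseteq> facet l \<inter> facet (\<omega> k)" using PA(1)[OF fstne[OF j(1) False]] j(2) by blast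
      then show ?thesis by (auto simp: Xi_def)
    qed
  qed
  show inj: "inj_on (Psi \<omega> \<tau> k) (Xi g)"
  proof (rule inj_onI)
    fix j1 j2 assume j: "j1 \<in> Xi g" "j2 \<in> Xi g" "Psi \<omega> \<tau> k j1 = Psi \<omega> \<tau> k j2"
    show "j1 = j2"
    proof (cases "j1 = k"; cases "j2 = k")
      assume "j1 = k" "j2 = k" then show ?thesis by simp
    next
      assume a: "j1 = k" "j2 \<noteq> k"
      then show ?thesis using PA(2)[OF fstne[OF j(2) a(2)]] j(3) by (simp add: Psi_def)
    next
      assume a: "j1 \<noteq> k" "j2 = k"
      then show ?thesis using PA(2)[OF fstne[OF j(1) a(1)]] j(3) by (simp add: Psi_def)
    next
      assume a: "j1 \<noteq> k" "j2 \<noteq> k"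
      have "\<tau> k ` (facet j1 \<inter> facet k) = \<tau> k ` (facet j2 \<inter> facet k)"
        using PA(1)[OF fstne[OF j(1) a(1)]] PA(1)[OF fstne[OF j(2) a(2)]] j(3) by metis
      moreover have "facet j1 \<inter> facet k \<subseteq> facet k" "facet j2 \<inter> facet k \<subseteq> facet k" by blast+
      ultimately have "facet j1 \<inter> facet k = facet j2 \<inter> facet k"
        using inj_on_image_eq_iff[OF tau_inj[of k]] by blast
      then have "{j1,k} = {j2,k}" using Xi_two(3)[OF fstne[OF j(1) a(1)]] Xi_two(3)[OF fstne[OF j(2) a(2)]] by metis
      then have "j1 \<in> {j2,k}" by blast
      then show ?thesis using a by blast
    qed
  qed
  have "card (Psi \<omega> \<tau> k ` Xi g) = card (Xi (\<tau> k ` g))"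
    using card_image[OF inj] CP[OF assms] by simp
  then show "Xi (\<tau> k ` g) = Psi \<omega> \<tau> k ` Xi g"
    using sub by (intro card_subset_eq[symmetric]) auto
qed

lemma LC: "proper_face g \<Longrightarrow> valid_comp \<tau> g c \<Longrightarrow> proper_face (comp_map \<tau> c ` g) \<and>
   Xi (comp_map \<tau> c ` g) = Psi_comp \<omega> \<tau> c ` Xi g \<and> inj_on (Psi_comp \<omega> \<tau> c) (Xi g)"
proof (induction c arbitrary: g)
  case Nil then show ?case by (simp add: Psi_comp_def comp_map_def)
next
  case (Cons k ks)
  have g: "g \<subseteq> facet k" "valid_comp \<tau> (\<tau> k ` g) ks" using Cons.prems by auto
  have p: "proper_face (\<tau> k ` g)" using fp Cons.prems(1) g(1) by blast
  note IH = Cons.IH[OF p g(2)]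
  note L = L1[OF Cons.prems(1) g(1)]
  have e: "Psi_comp \<omega> \<tau> (k#ks) = Psi_comp \<omega> \<tau> ks \<circ> Psi \<omega> \<tau> k" by (rule ext) simp
  have i2: "inj_on (Psi_comp \<omega> \<tau> ks) (Psi \<omega> \<tau> k ` Xi g)" using IH L(1) by simp
  show ?case unfolding comp_map_img_Cons e
    using IH L(1) comp_inj_on[OF L(2) i2] by (simp add: image_comp comp_def)
qed

lemma INJ: "valid_comp \<tau> g c \<Longrightarrow> inj_on (comp_map \<tau> c) g"
proof (induction c arbitrary: g)
  case Nil then show ?case by (simp add: comp_map_def inj_on_def)
next
  case (Cons k ks)
  have e: "comp_map \<tau> (k#ks) = comp_map \<tau> ks \<circ> \<tau> k" by (rule ext) simp
  have "inj_on (\<tau> k) g" using tau_inj[of k] Cons.prems by (auto intro: inj_on_subset)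
  moreover have "inj_on (comp_map \<tau> ks) (\<tau> k ` g)" using Cons by simp
  ultimately show ?case unfolding e by (rule comp_inj_on)
qed

end


locale sfps = fps +
  fixes v0 :: "real^'n"
  assumes strong: "strong \<omega> \<tau>" and v0: "vertex v0"
    and allv: "\<And>w. vertex w \<Longrightarrow> {w} \<in> face_family \<tau> {v0}"
begin

definition X0 where "X0 = Xi {v0}"
definition R where "R w = {c. valid_comp \<tau> {v0} c \<and> comp_map \<tau> c v0 = w}"
definition Psw where "Psw w = Psi_comp \<omega> \<tau> (SOME c. c \<in> R w)"
definition sig where "sig a x = \<tau> (Psw x a) x"

lemma strongA: "proper_face f \<Longrightarrow> valid_comp \<tau> f c1 \<Longrightarrow> valid_comp \<tau> f c2 \<Longrightarrow>
   comp_map \<tau> c1 ` f = comp_map \<tau> c2 ` f \<Longrightarrow> p \<in> f \<Longrightarrow> comp_map \<tau> c1 p = comp_map \<tau> c2 p"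
  using strong unfolding strong_def by blast

lemma strongB: "proper_face f \<Longrightarrow> valid_comp \<tau> f c1 \<Longrightarrow> valid_comp \<tau> f c2 \<Longrightarrow>
   comp_map \<tau> c1 ` f = comp_map \<tau> c2 ` f \<Longrightarrow> j \<in> Xi f \<Longrightarrow> Psi_comp \<omega> \<tau> c1 j = Psi_comp \<omega> \<tau> c2 j"
  using strong unfolding strong_def by blast

lemma R_ne: assumes "vertex w" shows "\<exists>c. c \<in> R w"
proof -
  obtain ks where "{w} = comp_map \<tau> ks ` {v0}" "valid_comp \<tau> {v0} ks"
    using allv[OF assms] unfolding face_family_def by blast
  then show ?thesis unfolding R_def by auto
qed

lemma R_some: "vertex w \<Longrightarrow> (SOME c. c \<in> R w) \<in> R w"
  using R_ne someI_ex by metis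

lemma Fr: assumes "c \<in> R w" "a \<in> X0" shows "Psi_comp \<omega> \<tau> c a = Psw w a"
proof -
  have vw: "vertex w"
  proof -
    have "proper_face (comp_map \<tau> c ` {v0})" using LC[OF vertex_proper(1)[OF v0]] assms(1) by (auto simp: R_def)
    then show ?thesis using assms(1) proper_singleton_vertex by (auto simp: R_def)
  qed
  note s = R_some[OF vw]
  show ?thesis unfolding Psw_def
    by (rule strongB[OF vertex_proper(1)[OF v0]]) (use assms s in \<open>auto simp: R_def X0_def\<close>)
qed

lemma vertex_comp: "vertex w \<Longrightarrow> valid_comp \<tau> {w} c \<Longrightarrow> vertex (comp_map \<tau> c w)"
  using LC[OF vertex_proper(1)] proper_singleton_vertex by fastforce

lemma F1: assumes "vertex w" "valid_comp \<tau> {w} c" "a \<in> X0"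
  shows "Psw (comp_map \<tau> c w) a = Psi_comp \<omega> \<tau> c (Psw w a)"
proof -
  obtain d where d: "d \<in> R w" using R_ne[OF assms(1)] by blast
  have im: "comp_map \<tau> d ` {v0} = {w}" using d by (auto simp: R_def)
  have "d @ c \<in> R (comp_map \<tau> c w)"
    using d assms(2) im by (auto simp: R_def valid_append comp_map_append)
  from Fr[OF this assms(3)] Fr[OF d assms(3)] show ?thesis by (simp add: Psi_comp_append)
qed

lemma F2: assumes "vertex w" shows "Psw w ` X0 = Xi {w}" "inj_on (Psw w) X0"
proof -
  obtain d where d: "d \<in> R w" using R_ne[OF assms(1)] by blast
  have im: "comp_map \<tau> d ` {v0} = {w}" using d by (auto simp: R_def)
  note L = LC[OF vertex_proper(1)[OF v0], of d]
  have e: "\<And>a. a \<in> X0 \<Longrightarrow> Psi_comp \<omega> \<tau> d a = Psw w a" using Fr[OF d] by blast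
  show "Psw w ` X0 = Xi {w}" using L d im e unfolding X0_def R_def by (auto simp: image_iff)
  show "inj_on (Psw w) X0" using L d e inj_on_cong unfolding X0_def R_def by (metis (mono_tags, lifting) mem_Collect_eq)
qed

lemma X0_card: "card X0 = CARD('n)" "finite X0"
  using vertex_proper(3)[OF v0] by (auto simp: X0_def)

lemma sig_facts: assumes "vertex x" "a \<in> X0"
  shows "x \<in> facet (Psw x a)" "vertex (sig a x)"
    "\<And>b. b \<in> X0 \<Longrightarrow> Psw (sig a x) b = Psi \<omega> \<tau> (Psw x a) (Psw x b)"
    "sig a (sig a x) = x"
proof -
  have k: "Psw x a \<in> Xi {x}" using F2(1)[OF assms(1)] assms(2) by blast
  then show xk: "x \<in> facet (Psw x a)" by (simp add: Xi_def)
  show vs: "vertex (sig a x)" unfolding sig_def using VM[OF assms(1) xk] .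
  have val: "valid_comp \<tau> {x} [Psw x a]" using xk by simp
  show S1: "\<And>b. b \<in> X0 \<Longrightarrow> Psw (sig a x) b = Psi \<omega> \<tau> (Psw x a) (Psw x b)"
    using F1[OF assms(1) val] by (simp add: sig_def)
  have "Psw (sig a x) a = \<omega> (Psw x a)" using S1[OF assms(2)] by (simp add: Psi_def)
  then show "sig a (sig a x) = x" using tau_inv[OF xk] by (simp add: sig_def)
qed

lemma sig_comm: assumes "vertex x" "a \<in> X0" "b \<in> X0" "a \<noteq> b"
  shows "sig b (sig a x) = sig a (sig b x)"
proof -
  define j where "j = Psw x a"
  define k where "k = Psw x b"
  have jk: "j \<in> Xi {x}" "k \<in> Xi {x}" using F2(1)[OF assms(1)] assms(2,3) unfolding j_def k_def by blast+
  have "j \<noteq> k" using F2(2)[OF assms(1)] assms unfolding j_def k_def by (meson inj_onD)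
  moreover have "consJ (Xi {x})" using proper_Xi(1)[OF vertex_proper(1)[OF assms(1)]] .
  ultimately have fjk: "fst j \<noteq> fst k" using jk unfolding consJ_def by blast
  have e1: "sig b (sig a x) = \<tau> (Psi \<omega> \<tau> j k) (\<tau> j x)"
    using sig_facts(3)[OF assms(1,2) assms(3)] unfolding sig_def j_def k_def by simp
  have e2: "sig a (sig b x) = \<tau> (Psi \<omega> \<tau> k j) (\<tau> k x)"
    using sig_facts(3)[OF assms(1,3) assms(2)] unfolding sig_def j_def k_def by simp
  have c1: "\<tau> j ` (facet j \<inter> facet k) = facet (\<omega> j) \<inter> facet (Psi \<omega> \<tau> j k)"
    using PA(1)[of k j] fjk by (simp add: Int_commute)
  have c2: "\<tau> k ` (facet j \<inter> facet k) = facet (Psi \<omega> \<tau> k j) \<inter> facet (\<omega> k)"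
    using PA(1)[OF fjk] by simp
  have "x \<in> facet j \<inter> facet k" using jk by (simp add: Xi_def)
  from comm[OF fjk c1 c2 this] e1 e2 show ?thesis by simp
qed

inductive_set orb :: "'n sidx set \<Rightarrow> real^'n \<Rightarrow> (real^'n) set" for T u where
  base: "u \<in> orb T u"
| step: "x \<in> orb T u \<Longrightarrow> a \<in> T \<Longrightarrow> sig a x \<in> orb T u"

lemma O1: assumes "vertex u" "T \<subseteq> X0" shows "x \<in> orb T u \<Longrightarrow> vertex x"
proof (induction rule: orb.induct)
  case base then show ?case using assms by simp
next
  case (step x a) then show ?case using sig_facts(2) assms(2) by blast
qed

lemma O2: "y \<in> orb T x \<Longrightarrow> x \<in> orb T u \<Longrightarrow> y \<in> orb T u"
  by (induction rule: orb.induct) (auto intro: orb.step)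

lemma O3: assumes "vertex u" "T \<subseteq> X0" shows "x \<in> orb T u \<Longrightarrow> u \<in> orb T x"
proof (induction rule: orb.induct)
  case base then show ?case by (rule orb.base)
next
  case (step x a)
  have vx: "vertex x" using O1[OF assms step.hyps(1)] .
  have "sig a (sig a x) \<in> orb T (sig a x)" using orb.step[OF orb.base step.hyps(2)] .
  moreover have "a \<in> X0" using step.hyps(2) assms(2) by blast
  ultimately have "x \<in> orb T (sig a x)" using sig_facts(4)[OF vx] by metis
  then show ?case using O2 step.IH by blast
qed

lemma O4: assumes "vertex u" "T \<subseteq> X0" "a \<in> X0"
  shows "x \<in> orb (insert a T) u \<Longrightarrow> x \<in> orb T u \<union> sig a ` orb T u"
proof (induction rule: orb.induct)
  case base then show ?case by (auto intro: orb.base)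
next
  case (step x b)
  have T0: "insert a T \<subseteq> X0" using assms by auto
  show ?case
  proof (cases "x \<in> orb T u")
    case True
    then show ?thesis using step.hyps(2) by (auto intro: orb.step)
  next
    case False
    then obtain y where y: "y \<in> orb T u" "x = sig a y" using step.IH by auto
    have vy: "vertex y" using O1[OF assms(1,2) y(1)] .
    show ?thesis
    proof (cases "b = a")
      case True
      then show ?thesis using y sig_facts(4)[OF vy assms(3)] by simp
    next
      case False
      then have bT: "b \<in> T" using step.hyps(2) by simp
      have "b \<in> X0" using bT assms(2) by blast
      then have "sig b x = sig a (sig b y)" using y(2) sig_comm[OF vy assms(3) _ ] False by metis
      moreover have "sig b y \<in> orb T u" using orb.step[OF y(1) bT] .
      ultimately show ?thesis by blast
    qed
  qed
qed

lemma orb_fin: "vertex u \<Longrightarrow> T \<subseteq> X0 \<Longrightarrow> finite (orb T u)"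
  using O1 vertices_finite by (metis (no_types, lifting) finite_subset mem_Collect_eq subsetI)

lemma O6: assumes "vertex u" "T \<subseteq> X0"
  shows "finite T' \<Longrightarrow> T' \<subseteq> X0 \<Longrightarrow> card (orb (T \<union> T') u) \<le> card (orb T u) * 2 ^ card T'"
proof (induction T' rule: finite_induct)
  case empty then show ?case by simp
next
  case (insert a F)
  have F0: "T \<union> F \<subseteq> X0" "a \<in> X0" using insert assms by auto
  have s: "orb (T \<union> insert a F) u \<subseteq> orb (T \<union> F) u \<union> sig a ` orb (T \<union> F) u"
    using O4[OF assms(1) F0] by auto
  have fin: "finite (orb (T \<union> F) u)" using orb_fin[OF assms(1) F0(1)] .
  have "card (orb (T \<union> insert a F) u) \<le> card (orb (T \<union> F) u \<union> sig a ` orb (T \<union> F) u)"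
    using card_mono[OF _ s] fin by blast
  also have "\<dots> \<le> card (orb (T \<union> F) u) + card (sig a ` orb (T \<union> F) u)" by (rule card_Un_le)
  also have "\<dots> \<le> 2 * card (orb (T \<union> F) u)" using card_image_le[OF fin, of "sig a"] by simp
  also have "\<dots> \<le> 2 * (card (orb T u) * 2 ^ card F)" using insert by simp
  also have "\<dots> = card (orb T u) * 2 ^ card (insert a F)" using insert by simp
  finally show ?case .
qed

lemma orb_empty: "x \<in> orb {} u \<Longrightarrow> x = u"
  by (induction rule: orb.induct) auto

lemma reach: "vertex x \<Longrightarrow> x \<in> orb X0 v0 \<Longrightarrow> valid_comp \<tau> {x} c \<Longrightarrow> comp_map \<tau> c x \<in> orb X0 v0"
proof (induction c arbitrary: x)
  case Nil then show ?case by simp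
next
  case (Cons k ks)
  have "k \<in> Xi {x}" using Cons.prems(3) by (simp add: Xi_def)
  then obtain a where a: "a \<in> X0" "k = Psw x a" using F2(1)[OF Cons.prems(1)] by (metis imageE)
  have e: "\<tau> k x = sig a x" using a by (simp add: sig_def)
  have "sig a x \<in> orb X0 v0" using orb.step[OF Cons.prems(2) a(1)] .
  moreover have "vertex (sig a x)" using sig_facts(2)[OF Cons.prems(1) a(1)] .
  moreover have "valid_comp \<tau> {sig a x} ks" using Cons.prems(3) e by simp
  ultimately show ?case using Cons.IH e by simp
qed

lemma O7: assumes "vertex u" shows "orb X0 u = {v. vertex v}"
proof
  show "orb X0 u \<subseteq> {v. vertex v}" using O1[OF assms] by blast
  show "{v. vertex v} \<subseteq> orb X0 u"
  proof
    fix w :: "real^'n" assume "w \<in> {v. vertex v}"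
    then obtain d where d: "d \<in> R w" using R_ne by blast
    have "w \<in> orb X0 v0" using reach[OF v0 orb.base, of d] d by (auto simp: R_def)
    moreover have "u \<in> orb X0 v0" using reach[OF v0 orb.base] R_ne[OF assms] by (auto simp: R_def)
    then have "v0 \<in> orb X0 u" using O3[OF v0] by blast
    ultimately show "w \<in> orb X0 u" using O2 by blast
  qed
qed

lemma O8: assumes "vertex u" "T \<subseteq> X0" shows "card (orb T u) = 2 ^ card T"
proof -
  have fT: "finite T" using X0_card(2) assms(2) finite_subset by blast
  have le: "card (orb T u) \<le> 2 ^ card T"
  proof -
    have "card (orb ({} \<union> T) u) \<le> card (orb {} u) * 2 ^ card T" using O6[of u "{}" T] assms fT by blast
    moreover have "orb {} u = {u}" using orb_empty orb.base by blast
    ultimately show ?thesis by simp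
  qed
  have fD: "finite (X0 - T)" using X0_card(2) by simp
  have cD: "card (X0 - T) = CARD('n) - card T" using X0_card assms(2) card_Diff_subset fT by metis
  have "card (orb (T \<union> (X0 - T)) u) \<le> card (orb T u) * 2 ^ card (X0 - T)"
    using O6[OF assms fD] by simp
  moreover have "T \<union> (X0 - T) = X0" using assms(2) by auto
  ultimately have "2 ^ CARD('n) \<le> card (orb T u) * 2 ^ (CARD('n) - card T)"
    using O7[OF assms(1)] vertices_card[where 'n='n] cD by simp
  moreover have "card T \<le> CARD('n)" using card_mono[OF X0_card(2) assms(2)] X0_card(1) by simp
  ultimately have ge: "2 ^ card T * 2 ^ (CARD('n) - card T) \<le> card (orb T u) * 2 ^ (CARD('n) - card T)"
    by (simp add: power_add[symmetric])
  then have "2 ^ card T \<le> card (orb T u)" by simp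
  with le show ?thesis by simp
qed

end


context sfps begin

lemma FA: assumes "T \<subseteq> X0"
  shows "valid_comp \<tau> g c \<Longrightarrow> proper_face g \<Longrightarrow> vertex x \<Longrightarrow> x \<in> g \<Longrightarrow> x \<in> orb T u \<Longrightarrow>
    Xi g = Psw x ` T \<Longrightarrow>
    comp_map \<tau> c x \<in> orb T u \<and> comp_map \<tau> c ` g = (\<Inter>j\<in>Psw (comp_map \<tau> c x) ` T. facet j)"
proof (induction c arbitrary: g x)
  case Nil
  have e: "(\<Inter>j\<in>Xi g. facet j) = (\<Inter>j\<in>Psw x ` T. facet j)" using Nil.prems(6) by simp
  have "g = (\<Inter>j\<in>Psw x ` T. facet j)" using trans[OF proper_Xi(3)[OF Nil.prems(2)] e] .
  then show ?case using Nil.prems(5) by simp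
next
  case (Cons k ks)
  have gk: "g \<subseteq> facet k" "valid_comp \<tau> (\<tau> k ` g) ks" using Cons.prems(1) by auto
  have "k \<in> Xi g" using gk(1) by (simp add: Xi_def)
  then obtain a where a: "a \<in> T" "k = Psw x a" using Cons.prems(6) by (metis imageE)
  have a0: "a \<in> X0" using a(1) assms by blast
  have e: "\<tau> k x = sig a x" using a by (simp add: sig_def)
  have p': "proper_face (\<tau> k ` g)" using fp[OF Cons.prems(2) gk(1)] .
  have v': "vertex (sig a x)" using sig_facts(2)[OF Cons.prems(3) a0] .
  have x': "sig a x \<in> \<tau> k ` g" using e Cons.prems(4) by (metis imageI)
  have o': "sig a x \<in> orb T u" using orb.step[OF Cons.prems(5) a(1)] .
  have "Xi (\<tau> k ` g) = Psi \<omega> \<tau> k ` Psw x ` T" using L1(1)[OF Cons.prems(2) gk(1)] Cons.prems(6) by simp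
  also have "\<dots> = Psw (sig a x) ` T"
  proof -
    have "\<And>b. b \<in> T \<Longrightarrow> Psw (sig a x) b = Psi \<omega> \<tau> k (Psw x b)"
      using sig_facts(3)[OF Cons.prems(3) a0] a(2) assms by blast
    then show ?thesis by (simp add: image_image)
  qed
  finally have X': "Xi (\<tau> k ` g) = Psw (sig a x) ` T" .
  note IH = Cons.IH[OF gk(2) p' v' x' o' X']
  show ?case using IH e by (simp add: image_image)
qed

lemma FB: assumes "T \<subseteq> X0" "proper_face f" "vertex u" "u \<in> f" "Xi f = Psw u ` T"
  shows "x \<in> orb T u \<Longrightarrow> \<exists>c. valid_comp \<tau> f c \<and> comp_map \<tau> c u = x"
proof (induction rule: orb.induct)
  case base
  have "valid_comp \<tau> f []" by simp
  then show ?case by (metis comp_map_Nil)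
next
  case (step x a)
  then obtain c where c: "valid_comp \<tau> f c" "comp_map \<tau> c u = x" by blast
  have "comp_map \<tau> c ` f = (\<Inter>j\<in>Psw x ` T. facet j)"
    using FA[OF assms(1) c(1) assms(2,3,4) orb.base assms(5)] c(2) by simp
  moreover have "(\<Inter>j\<in>Psw x ` T. facet j) \<subseteq> facet (Psw x a)" using step.hyps(2) by blast
  ultimately have "valid_comp \<tau> f (c @ [Psw x a])" using c(1) by (simp add: valid_append)
  moreover have "comp_map \<tau> (c @ [Psw x a]) u = sig a x" using c(2) by (simp add: comp_map_append sig_def)
  ultimately show ?case by blast
qed

lemma family_card: assumes "proper_face f" shows "card (face_family \<tau> f) = 2 ^ codim f"
proof -
  obtain u where u: "vertex u" "u \<in> f" using proper_vertex_ex[OF assms] by blast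
  define T where "T = {a \<in> X0. Psw u a \<in> Xi f}"
  define face where "face x = (\<Inter>j\<in>Psw x ` T. facet j)" for x
  have T0: "T \<subseteq> X0" by (auto simp: T_def)
  have sub: "Xi f \<subseteq> Xi {u}" using u(2) by (auto simp: Xi_def)
  have XiT: "Xi f = Psw u ` T"
  proof
    show "Psw u ` T \<subseteq> Xi f" by (auto simp: T_def)
    show "Xi f \<subseteq> Psw u ` T"
    proof
      fix j assume j: "j \<in> Xi f"
      then have "j \<in> Psw u ` X0" using sub F2(1)[OF u(1)] by blast
      then obtain a where "a \<in> X0" "j = Psw u a" by (metis imageE)
      then show "j \<in> Psw u ` T" using j by (auto simp: T_def)
    qed
  qed
  have fam: "face_family \<tau> f = face ` orb T u"
  proof
    show "face_family \<tau> f \<subseteq> face ` orb T u"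
    proof
      fix g assume "g \<in> face_family \<tau> f"
      then obtain c where c: "g = comp_map \<tau> c ` f" "valid_comp \<tau> f c" by (auto simp: face_family_def)
      from FA[OF T0 c(2) assms u orb.base XiT] c(1) show "g \<in> face ` orb T u" by (auto simp: face_def)
    qed
    show "face ` orb T u \<subseteq> face_family \<tau> f"
    proof
      fix g assume "g \<in> face ` orb T u"
      then obtain x where x: "x \<in> orb T u" "g = face x" by blast
      obtain c where c: "valid_comp \<tau> f c" "comp_map \<tau> c u = x" using FB[OF T0 assms u XiT x(1)] by blast
      from FA[OF T0 c(1) assms u orb.base XiT] c x(2) have "g = comp_map \<tau> c ` f" by (simp add: face_def)
      then show "g \<in> face_family \<tau> f" using c(1) by (auto simp: face_family_def)
    qed
  qed
  have inj: "inj_on face (orb T u)"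
  proof (rule inj_onI)
    fix x y assume xy: "x \<in> orb T u" "y \<in> orb T u" "face x = face y"
    obtain c where c: "valid_comp \<tau> f c" "comp_map \<tau> c u = x" using FB[OF T0 assms u XiT xy(1)] by blast
    obtain d where d: "valid_comp \<tau> f d" "comp_map \<tau> d u = y" using FB[OF T0 assms u XiT xy(2)] by blast
    have "comp_map \<tau> c ` f = face x" using FA[OF T0 c(1) assms u orb.base XiT] c(2) by (simp add: face_def)
    moreover have "comp_map \<tau> d ` f = face y" using FA[OF T0 d(1) assms u orb.base XiT] d(2) by (simp add: face_def)
    ultimately have "comp_map \<tau> c ` f = comp_map \<tau> d ` f" using xy(3) by simp
    from strongA[OF assms c(1) d(1) this u(2)] show "x = y" using c(2) d(2) by simp
  qed
  have "card (face_family \<tau> f) = card (orb T u)" using fam card_image[OF inj] by simp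
  also have "\<dots> = 2 ^ card T" using O8[OF u(1) T0] .
  also have "card T = card (Xi f)"
  proof -
    have "inj_on (Psw u) T" using F2(2)[OF u(1)] T0 inj_on_subset by blast
    then show ?thesis using XiT card_image by metis
  qed
  finally show ?thesis by (simp add: codim_def)
qed

end

theorem mainTheorem7:
  fixes \<omega> :: "'n::finite sidx \<Rightarrow> 'n sidx"
    and \<tau> :: "'n sidx \<Rightarrow> real^'n \<Rightarrow> real^'n"
  assumes "regular_fps \<omega> \<tau>" and "strong \<omega> \<tau>"
  shows "perfect \<tau> \<longleftrightarrow>
    (\<exists>f. proper_face f \<and> (\<forall>v. vertex v \<longrightarrow> {v} \<in> face_family \<tau> f))"
proof -
  interpret fps \<omega> \<tau> using assms(1) by unfold_locales
  define q :: "real^'n" where "q = (\<chi> i. 1/4)"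
  have vq: "vertex q" by (simp add: q_def vertex_def)
  show ?thesis
  proof
    assume perf: "perfect \<tau>"
    have pq: "proper_face {q}" using vertex_proper(1)[OF vq] .
    have c: "card (face_family \<tau> {q}) = 2 ^ CARD('n)"
      using perf pq vertex_proper(3)[OF vq] unfolding perfect_def codim_def by simp
    have sub: "face_family \<tau> {q} \<subseteq> (\<lambda>w. {w}) ` {v. vertex v}"
    proof
      fix g assume "g \<in> face_family \<tau> {q}"
      then obtain ks where ks: "g = comp_map \<tau> ks ` {q}" "valid_comp \<tau> {q} ks"
        by (auto simp: face_family_def)
      have "proper_face {comp_map \<tau> ks q}" using LC[OF pq ks(2)] by simp
      then have "vertex (comp_map \<tau> ks q)" by (rule proper_singleton_vertex)
      then show "g \<in> (\<lambda>w. {w}) ` {v. vertex v}" using ks(1) by simp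
    qed
    have fin: "finite ((\<lambda>w. {w}) ` {v :: real^'n. vertex v})" using vertices_finite[where 'n='n] by (rule finite_imageI)
    have "card ((\<lambda>w. {w}) ` {v :: real^'n. vertex v}) = 2 ^ CARD('n)"
      using card_image[of "\<lambda>w. {w}" "{v :: real^'n. vertex v}"] vertices_card[where 'n='n]
      by (simp add: inj_on_def)
    then have "face_family \<tau> {q} = (\<lambda>w. {w}) ` {v. vertex v}"
      using card_subset_eq[OF fin sub] c by simp
    then show "\<exists>f. proper_face f \<and> (\<forall>v. vertex v \<longrightarrow> {v} \<in> face_family \<tau> f)" using pq by blast
  next
    assume "\<exists>f. proper_face f \<and> (\<forall>v. vertex v \<longrightarrow> {v} \<in> face_family \<tau> f)"
    then obtain f where f: "proper_face f" "\<And>v. vertex v \<Longrightarrow> {v} \<in> face_family \<tau> f" by blast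
    obtain c where c: "{q} = comp_map \<tau> c ` f" "valid_comp \<tau> f c"
      using f(2)[OF vq] by (auto simp: face_family_def)
    have "card f = 1" using card_image[OF INJ[OF c(2)]] c(1) by (metis is_singletonI is_singleton_altdef)
    then obtain p where p: "f = {p}" using card_1_singletonE by blast
    have vp: "vertex p" using f(1) p proper_singleton_vertex by blast
    interpret sfps \<omega> \<tau> p
      by unfold_locales (use assms(2) vp f(2) p in auto)
    show "perfect \<tau>" unfolding perfect_def using family_card by blast
  qed
qed


end
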